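(* Let $V,s,c$ satisfy conditions (V), (S), (C) below, let $\mu_0\in\mathcal{M}^+(\mathbb{R}^d)$ with $\operatorname{supp}\mu_0\subseteq B(0,R_0)$, let $R$ be the radius in (S2), and set $\tilde R=\max\{R,R_0\}$. Let $\mu^N_t$ be the lattice approximate solution defined below. Then for all $N$ large enough, all $l=0,\dots,M$ and all $\tau\in[0,\Delta_N]$, $$\operatorname{supp}(\mu^N_{t_l+\tau})\subseteq B\bigl(0,e^{C_ST}(\tilde R+2)-1\bigr).$$ In particular, these measures are supported in a compact set independent of $N$, $l$ and $\tau$.
   Context: $\mathcal{M}^+(\mathbb{R}^k)$: finite nonnegative Borel measures; $\|f\|_{BL}=\max(\sup|f|,\operatorname{Lip}f)$, $\|\mu\|_{BL^*}=\sup\{\int\psi\,d\mu:\|\psi\|_{BL}\le1\}$. Conditions: (V) $V:\mathcal{M}^+(\mathbb{R}^d)\to\mathcal{M}^+(\mathbb{R}^d\times\mathbb{R}^d)$, $\pi_1^{\#}V[\mu]=\mu$; (V1) $\sup_{(x,v)\in\operatorname{supp}V[\mu]}|v|\le C_S(1+\sup_{(x,v)\in\operatorname{supp}V[\mu]}|x|)$; (V2) for each $R'>0$, $\|V[\mu]-V[\nu]\|_{BL^*}\le C_F(R')\|\mu-\nu\|_{BL^*}$ for $\mu,\nu$ supported in $B(0,R')$. (S) $s:\mathcal{M}^+(\mathbb{R}^d)\to\mathcal{M}^+(\mathbb{R}^d)$, (S1) $\|s[\mu]-s[\nu]\|_{BL^*}\le L\|\mu-\nu\|_{BL^*}$, (S2)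 $\operatorname{supp}s[\mu]\subseteq B(0,R)$ for all $\mu$. (C) $c:\mathbb{R}^d\times\mathcal{M}^+(\mathbb{R}^d)\to\mathbb{R}$, (C1) $|c|\le C_b$, (C2) $|c(x,\mu)-c(y,\nu)|\le C_L(|x-y|+\|\mu-\nu\|_{BL^*})$. Lattice scheme: fix $T>0$; for $N\in\mathbb{N}$, $\Delta_N=1/N$; $x_1,\dots,x_I$ enumerate $(N^{-2}\mathbb{Z}^d)\cap[-N,N]^d$, $v_1,\dots,v_J$ enumerate $(N^{-1}\mathbb{Z}^d)\cap[-N,N]^d$; $Q_i=x_i+[0,\Delta_N^2)^d$, $Q'_j=v_j+[0,\Delta_N)^d$; $m_i^x(\mu)=\mu(Q_i)$, $m_{ij}^v(W)=W(Q_i\times Q'_j)$. Time points $t_l=l/N$, $l=0,\dots,M$, with $M$ such that $[0,T]$ is covered by $[t_l,t_{l+1})$, $l<M$, and $[t_M,t_{M+1}]$, $t_{M+1}=T$, each of length at most $\Delta_N$. Set $\mu^N_0=\sum_i m_i^x(\mu_0)\delta_{x_i}$ and recursively, for $\tau\in[0,\Delta_N]$, $$\mu^N_{t_l+\tau}=\tau\sum_{i=1}^I m_i^x(s[\mu^N_{t_l}])\delta_{x_i}+\sum_{i=1}^I\sum_{j=1}^J m_{ij}^v(V[\mu^N_{t_l}])\,e^{c(x_i,\mu^N_{t_l})\tau}\,\delta_{x_i+\tau v_j}.$$ *)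

theory Defs
  imports "HOL-Analysis.Analysis"
begin

definition fin_borel :: "'a::topological_space measure \<Rightarrow> bool" where
  "fin_borel M \<longleftrightarrow> sets M = sets borel \<and> finite_measure M"

definition msupp :: "'a::metric_space measure \<Rightarrow> 'a set" where
  "msupp M = {x. \<forall>e>0. emeasure M (ball x e) > 0}"

text \<open>Bounded-Lipschitz norm of a function (as a value in ereal, so that it is
  infinite for unbounded or non-Lipschitz functions).\<close>
definition bl_norm :: "('a::metric_space \<Rightarrow> real) \<Rightarrow> ereal" where
  "bl_norm f = max (SUP x. ereal \<bar>f x\<bar>)
                   (SUP p\<in>{(x,y). x \<noteq> y}. ereal (\<bar>f (fst p) - f (snd p)\<bar> / dist (fst p) (snd p)))"

definition bl_dist :: "'a::metric_space measure \<Rightarrow> 'a measure \<Rightarrow> real" where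
  "bl_dist \<mu> \<nu> = Sup ((\<lambda>\<psi>. (\<integral>x. \<psi> x \<partial>\<mu>) - (\<integral>x. \<psi> x \<partial>\<nu>)) ` {\<psi>. bl_norm \<psi> \<le> 1})"

definition wmeas :: "'i set \<Rightarrow> ('i \<Rightarrow> 'a::topological_space) \<Rightarrow> ('i \<Rightarrow> real) \<Rightarrow> 'a measure" where
  "wmeas I p w = measure_of UNIV (sets borel) (\<lambda>A. \<Sum>i\<in>I. ennreal (w i) * indicator A (p i))"

definition xgrid :: "nat \<Rightarrow> ((real^'d) set)" where
  "xgrid N = {x. \<forall>k. (\<exists>z::int. x$k = real_of_int z / (real N)^2) \<and> \<bar>x$k\<bar> \<le> real N}"

definition vgrid :: "nat \<Rightarrow> ((real^'d) set)" where
  "vgrid N = {v. \<forall>k. (\<exists>z::int. v$k = real_of_int z / real N) \<and> \<bar>v$k\<bar> \<le> real N}"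

definition cellx :: "nat \<Rightarrow> real^'d \<Rightarrow> ((real^'d) set)" where
  "cellx N x = {y. \<forall>k. x$k \<le> y$k \<and> y$k < x$k + 1 / (real N)^2}"

definition cellv :: "nat \<Rightarrow> real^'d \<Rightarrow> ((real^'d) set)" where
  "cellv N v = {y. \<forall>k. v$k \<le> y$k \<and> y$k < v$k + 1 / real N}"

definition lattice_step ::
  "nat \<Rightarrow> ((real^'d) measure \<Rightarrow> ((real^'d) \<times> (real^'d)) measure) \<Rightarrow> ((real^'d) measure \<Rightarrow> (real^'d) measure)
   \<Rightarrow> (real^'d \<Rightarrow> (real^'d) measure \<Rightarrow> real) \<Rightarrow> (real^'d) measure \<Rightarrow> real \<Rightarrow> (real^'d) measure" where
  "lattice_step N V s c \<mu> \<tau> =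
     wmeas (Inl ` xgrid N \<union> Inr ` (xgrid N \<times> vgrid N))
       (case_sum (\<lambda>x. x) (\<lambda>(x,v). x + \<tau> *\<^sub>R v))
       (case_sum (\<lambda>x. \<tau> * measure (s \<mu>) (cellx N x))
                 (\<lambda>(x,v). measure (V \<mu>) (cellx N x \<times> cellv N v) * exp (c x \<mu> * \<tau>)))"

definition lattice_init :: "nat \<Rightarrow> (real^'d) measure \<Rightarrow> (real^'d) measure" where
  "lattice_init N \<mu>0 = wmeas (xgrid N) (\<lambda>x. x) (\<lambda>x. measure \<mu>0 (cellx N x))"

text \<open>lattice_node ... l = mu^N_(t_l), with t_l = l / N.\<close>
primrec lattice_node ::
  "nat \<Rightarrow> ((real^'d) measure \<Rightarrow> ((real^'d) \<times> (real^'d)) measure) \<Rightarrow> ((real^'d) measure \<Rightarrow> (real^'d) measure)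
   \<Rightarrow> (real^'d \<Rightarrow> (real^'d) measure \<Rightarrow> real) \<Rightarrow> (real^'d) measure \<Rightarrow> nat \<Rightarrow> (real^'d) measure" where
  "lattice_node N V s c \<mu>0 0 = lattice_init N \<mu>0"
| "lattice_node N V s c \<mu>0 (Suc l) = lattice_step N V s c (lattice_node N V s c \<mu>0 l) (1 / real N)"

text \<open>lattice_sol ... l tau = mu^N_(t_l + tau), for tau in [0, 1/N].\<close>
definition lattice_sol ::
  "nat \<Rightarrow> ((real^'d) measure \<Rightarrow> ((real^'d) \<times> (real^'d)) measure) \<Rightarrow> ((real^'d) measure \<Rightarrow> (real^'d) measure)
   \<Rightarrow> (real^'d \<Rightarrow> (real^'d) measure \<Rightarrow> real) \<Rightarrow> (real^'d) measure \<Rightarrow> nat \<Rightarrow> real \<Rightarrow> (real^'d) measure" where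
  "lattice_sol N V s c \<mu>0 l \<tau> = lattice_step N V s c (lattice_node N V s c \<mu>0 l) \<tau>"

end

theory Submission
  imports Defs "HOL-Probability.Giry_Monad"
begin

lemma wmeas_emeasure_le:
  "emeasure (wmeas I p w) A \<le> (\<Sum>i\<in>I. ennreal (w i) * indicator A (p i))"
  unfolding wmeas_def emeasure_measure_of_conv by auto

lemma sets_wmeas[simp]: "sets (wmeas I p w) = sets borel"
  unfolding wmeas_def
  by (metis sets.sets_measure_of_eq space_borel)

lemma space_wmeas[simp]: "space (wmeas I p w) = UNIV"
  unfolding wmeas_def by (simp add: space_measure_of_conv)

lemma fin_borel_wmeas: "fin_borel (wmeas I p w)"
  unfolding fin_borel_def
proof
  show "sets (wmeas I p w) = sets borel" by simp
  have "(\<Sum>i\<in>I. ennreal (w i) * indicator UNIV (p i)) < \<infinity>"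
    by (cases "finite I") (auto simp: ennreal_sum_less_top infinity_ennreal_def)
  then have "emeasure (wmeas I p w) UNIV < \<infinity>"
    using wmeas_emeasure_le[of I p w UNIV] by (meson le_less_trans)
  then show "finite_measure (wmeas I p w)"
    by (intro finite_measureI) simp
qed

lemma msupp_wmeas:
  assumes "x \<in> msupp (wmeas I p w)"
  shows "\<exists>i\<in>I. w i > 0 \<and> p i = x"
proof (rule ccontr)
  assume na: "\<not> ?thesis"
  have "\<exists>e>0. (\<Sum>i\<in>I. ennreal (w i) * indicator (ball x e) (p i)) = 0"
  proof (cases "finite I")
    case True
    let ?P = "p ` {i\<in>I. w i > 0}"
    have "finite ?P" using True by (intro finite_imageI) simp
    hence "open (- ?P)" by (intro open_Compl finite_imp_closed)
    moreover have "x \<in> - ?P" using na by blast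
    ultimately obtain e where "e > 0" "ball x e \<subseteq> - ?P"
      by (rule openE)
    then have e: "e > 0" "\<forall>i\<in>I. w i > 0 \<longrightarrow> p i \<notin> ball x e" by auto
    have "(\<Sum>i\<in>I. ennreal (w i) * indicator (ball x e) (p i)) = 0"
    proof (rule sum.neutral, intro ballI)
      fix i assume i: "i \<in> I"
      show "ennreal (w i) * indicator (ball x e) (p i) = 0"
      proof (cases "w i > 0")
        case True
        then have "p i \<notin> ball x e" using e i by blast
        then show ?thesis by simp
      next
        case False
        then have "ennreal (w i) = 0" by (simp add: ennreal_eq_0_iff)
        then show ?thesis by simp
      qed
    qed
    then show ?thesis using e by blast
  next
    case False
    then show ?thesis by (intro exI[of _ "1::real"]) simp
  qed
  then obtain e where "e > 0" "(\<Sum>i\<in>I. ennreal (w i) * indicator (ball x e) (p i)) = 0" by blast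
  then have "emeasure (wmeas I p w) (ball x e) = 0"
    using wmeas_emeasure_le[of I p w "ball x e"] by simp
  moreover have "emeasure (wmeas I p w) (ball x e) > 0"
    using assms \<open>e > 0\<close> unfolding msupp_def by blast
  ultimately show False by simp
qed

lemma msupp_full:
  fixes M :: "'a::{metric_space, second_countable_topology} measure"
  assumes sM: "sets M = sets borel" and pos: "emeasure M A > 0"
  shows "\<exists>y\<in>A. y \<in> msupp M"
proof (rule ccontr)
  assume na: "\<not> ?thesis"
  define F where "F = {S. \<exists>y e. S = ball y e \<and> e > 0 \<and> emeasure M (ball y e) = 0}"
  have AF: "A \<subseteq> \<Union>F"
  proof
    fix y assume "y \<in> A"
    with na have "y \<notin> msupp M" by blast
    then obtain e where "e > 0" "\<not> emeasure M (ball y e) > 0" unfolding msupp_def by blast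
    then have "emeasure M (ball y e) = 0" by (simp add: not_gr_zero)
    then have "ball y e \<in> F" unfolding F_def using \<open>e > 0\<close> by blast
    then show "y \<in> \<Union>F" using \<open>e > 0\<close> by (meson UnionI centre_in_ball)
  qed
  have "\<And>S. S \<in> F \<Longrightarrow> open S" unfolding F_def by (elim CollectE exE conjE) simp
  then obtain F' where F': "F' \<subseteq> F" "countable F'" "\<Union>F' = \<Union>F" by (rule Lindelof)
  have "\<Union>(id ` F') \<in> null_sets M"
  proof (rule null_sets_UN')
    show "countable F'" by fact
    fix S assume "S \<in> F'"
    then have "S \<in> F" using F' by blast
    then obtain y e where S: "S = ball y e" "emeasure M (ball y e) = 0" unfolding F_def by blast
    have "ball y e \<in> sets M" using sM by simp
    then show "id S \<in> null_sets M" using S by (simp add: null_setsI)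
  qed
  then have nul: "\<Union>F \<in> null_sets M" using F'(3) by simp
  show False
  proof (cases "A \<in> sets M")
    case True
    then have "A \<in> null_sets M" using null_sets_subset[OF nul True AF] by blast
    then have "emeasure M A = 0" by (rule null_setsD1)
    then show False using pos by simp
  next
    case False
    then show False using pos emeasure_notin_sets[OF False] by simp
  qed
qed

lemma msupp_fst:
  fixes W :: "('a::metric_space \<times> 'b::metric_space) measure"
  assumes sW: "sets W = sets (borel :: ('a \<times> 'b) measure)" and d: "distr W borel fst = \<mu>"
    and yv: "(y, v) \<in> msupp W"
  shows "y \<in> msupp \<mu>"
  unfolding msupp_def
proof (intro CollectI allI impI)
  fix e :: real assume "e > 0"
  have mf: "fst \<in> measurable W borel"
    using measurable_cong_sets[OF sW refl] borel_measurable_continuous_onI[OF continuous_on_fst[OF continuous_on_id]]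
    by blast
  have "emeasure \<mu> (ball y e) = emeasure W (fst -` ball y e \<inter> space W)"
    using emeasure_distr[OF mf, of "ball y e"] d by simp
  moreover have "ball (y, v) e \<subseteq> fst -` ball y e \<inter> space W"
  proof -
    have "space W = UNIV" using sets_eq_imp_space_eq[OF sW] by simp
    moreover have "dist a y < e" if "dist (a, b) (y, v) < e" for a b
      using dist_fst_le[of "(a,b)" "(y,v)"] that by simp
    ultimately show ?thesis by (auto simp: dist_commute)
  qed
  moreover have "fst -` ball y e \<inter> space W \<in> sets W"
    using mf by (auto intro!: measurable_sets)
  ultimately have "emeasure W (ball (y,v) e) \<le> emeasure \<mu> (ball y e)"
    by (simp add: emeasure_mono)
  moreover have "emeasure W (ball (y,v) e) > 0" using yv \<open>e > 0\<close> unfolding msupp_def by auto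
  ultimately show "emeasure \<mu> (ball y e) > 0" by auto
qed

lemma cellx_norm:
  fixes x y :: "real^'d"
  assumes "y \<in> cellx N x"
  shows "norm (y - x) \<le> real CARD('d) / (real N)^2"
proof -
  have "norm (y - x) \<le> (\<Sum>k\<in>UNIV. \<bar>(y - x) $ k\<bar>)" by (rule norm_le_l1_cart)
  also have "\<dots> \<le> (\<Sum>k\<in>(UNIV::'d set). 1 / (real N)^2)"
    by (rule sum_mono) (use assms in \<open>auto simp: cellx_def\<close>, (smt (verit))+)
  finally show ?thesis by simp
qed

lemma cellv_norm:
  fixes x y :: "real^'d"
  assumes "y \<in> cellv N x"
  shows "norm (y - x) \<le> real CARD('d) / real N"
proof -
  have "norm (y - x) \<le> (\<Sum>k\<in>UNIV. \<bar>(y - x) $ k\<bar>)" by (rule norm_le_l1_cart)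
  also have "\<dots> \<le> (\<Sum>k\<in>(UNIV::'d set). 1 / real N)"
    by (rule sum_mono) (use assms in \<open>auto simp: cellv_def\<close>, (smt (verit))+)
  finally show ?thesis by simp
qed

lemma measure_pos_emeasure: "measure M A > 0 \<Longrightarrow> emeasure M A > 0"
  by (metis less_irrefl measure_def not_gr_zero enn2real_0)

lemma step_supp:
  fixes V :: "(real^'d) measure \<Rightarrow> ((real^'d) \<times> (real^'d)) measure"
    and s :: "(real^'d) measure \<Rightarrow> (real^'d) measure"
    and c :: "real^'d \<Rightarrow> (real^'d) measure \<Rightarrow> real"
  assumes V: "\<And>\<mu>. fin_borel \<mu> \<Longrightarrow> fin_borel (V \<mu>) \<and> distr (V \<mu>) borel fst = \<mu>"
    and V1: "\<And>\<mu> r. fin_borel \<mu> \<Longrightarrow> (\<forall>(x,v)\<in>msupp (V \<mu>). norm x \<le> r) \<Longrightarrow>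
               (\<forall>(x,v)\<in>msupp (V \<mu>). norm v \<le> C_S * (1 + r))"
    and S: "\<And>\<mu>. fin_borel \<mu> \<Longrightarrow> fin_borel (s \<mu>)"
    and S2: "\<And>\<mu>. fin_borel \<mu> \<Longrightarrow> msupp (s \<mu>) \<subseteq> ball 0 R"
    and fin: "fin_borel \<mu>" and P: "\<forall>y\<in>msupp \<mu>. norm y + 1 < u"
    and tau: "0 \<le> \<tau>" "\<tau> \<le> 1 / real N" and N: "N > 0" and CS: "C_S \<ge> 0"
    and x: "x \<in> msupp (lattice_step N V s c \<mu> \<tau>)"
  shows "(R > 0 \<and> norm x + 1 < R + 1 + real CARD('d) / (real N)^2) \<or>
         norm x + 1 < u * (1 + C_S / real N) + 2 * real CARD('d) / (real N)^2"
proof -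
  let ?d = "real CARD('d)"
  obtain i where i: "i \<in> Inl ` xgrid N \<union> Inr ` (xgrid N \<times> vgrid N)"
    and wi: "case_sum (\<lambda>x. \<tau> * measure (s \<mu>) (cellx N x))
                 (\<lambda>(x,v). measure (V \<mu>) (cellx N x \<times> cellv N v) * exp (c x \<mu> * \<tau>)) i > 0"
    and pi: "case_sum (\<lambda>x. x) (\<lambda>(x,v). x + \<tau> *\<^sub>R v) i = x"
    using msupp_wmeas[OF x[unfolded lattice_step_def]] by blast
  show ?thesis
  proof (cases i)
    case (Inl xi)
    then have "measure (s \<mu>) (cellx N xi) > 0" using wi tau
      by (simp add: zero_less_mult_iff)
    then have "emeasure (s \<mu>) (cellx N xi) > 0" by (rule measure_pos_emeasure)
    moreover have "sets (s \<mu>) = sets borel" using S[OF fin] unfolding fin_borel_def by auto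
    ultimately obtain y where y: "y \<in> cellx N xi" "y \<in> msupp (s \<mu>)"
      using msupp_full by blast
    have "norm y < R" using S2[OF fin] y(2) by auto
    moreover have "norm (y - xi) \<le> ?d / (real N)^2" by (rule cellx_norm[OF y(1)])
    moreover have "x = xi" using pi Inl by simp
    ultimately have "norm x < R + ?d / (real N)^2 \<and> R > 0"
      using norm_triangle_ineq2[of xi y] norm_minus_commute[of y xi]
      by (smt (verit) norm_ge_zero)
    then show ?thesis by auto
  next
    case (Inr xv)
    obtain xi vj where xv: "xv = (xi, vj)" by (cases xv)
    have "measure (V \<mu>) (cellx N xi \<times> cellv N vj) > 0" using wi Inr xv
      by (simp add: zero_less_mult_iff)
    then have "emeasure (V \<mu>) (cellx N xi \<times> cellv N vj) > 0" by (rule measure_pos_emeasure)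
    moreover have sV: "sets (V \<mu>) = sets borel" using V[OF fin] unfolding fin_borel_def by auto
    ultimately obtain y v where yv: "(y, v) \<in> cellx N xi \<times> cellv N vj" "(y, v) \<in> msupp (V \<mu>)"
      using msupp_full by blast
    have dV: "distr (V \<mu>) borel fst = \<mu>" using V[OF fin] by auto
    have ym: "y \<in> msupp \<mu>" by (rule msupp_fst[OF sV dV yv(2)])
    then have ny: "norm y + 1 < u" using P by auto
    have "\<forall>(x,v)\<in>msupp (V \<mu>). norm x \<le> u - 1"
    proof (clarify)
      fix a b assume "(a, b) \<in> msupp (V \<mu>)"
      then have "a \<in> msupp \<mu>" by (rule msupp_fst[OF sV dV])
      then show "norm a \<le> u - 1" using P by force
    qed
    from V1[OF fin this] yv(2) have nv: "norm v \<le> C_S * u" by auto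
    have c1: "norm (y - xi) \<le> ?d / (real N)^2" using yv(1) by (intro cellx_norm) auto
    have c2: "norm (v - vj) \<le> ?d / real N" using yv(1) by (intro cellv_norm) auto
    have x: "x = xi + \<tau> *\<^sub>R vj" using pi Inr xv by simp
    have nxi: "norm xi \<le> norm y + ?d / (real N)^2"
      using norm_triangle_ineq2[of xi y] norm_minus_commute[of y xi] c1 by linarith
    have nvj: "norm vj \<le> C_S * u + ?d / real N"
      using norm_triangle_ineq2[of vj v] norm_minus_commute[of v vj] c2 nv by linarith
    have "norm x \<le> norm xi + \<tau> * norm vj" unfolding x
      using norm_triangle_ineq[of xi "\<tau> *\<^sub>R vj"] tau by simp
    also have "\<tau> * norm vj \<le> \<tau> * (C_S * u + ?d / real N)"
      using nvj tau by (simp add: mult_left_mono)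
    also have "\<dots> \<le> (1 / real N) * (C_S * u + ?d / real N)"
    proof (rule mult_right_mono)
      have "u > 0" using ny norm_ge_zero[of y] by linarith
      then show "0 \<le> C_S * u + ?d / real N" using CS by simp
    qed (use tau in auto)
    finally have "norm x \<le> norm xi + (1 / real N) * (C_S * u + ?d / real N)" by simp
    then have "norm x + 1 < u + ?d / (real N)^2 + (1 / real N) * (C_S * u + ?d / real N)"
      using nxi ny by linarith
    also have "\<dots> = u * (1 + C_S / real N) + 2 * ?d / (real N)^2"
      using N by (simp add: field_simps power2_eq_square)
    finally show ?thesis by auto
  qed
qed

lemma init_supp:
  fixes \<mu>0 :: "(real^'d) measure"
  assumes fin: "fin_borel \<mu>0" and sub: "msupp \<mu>0 \<subseteq> ball 0 R0"
    and x: "x \<in> msupp (lattice_init N \<mu>0)"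
  shows "R0 > 0 \<and> norm x < R0 + real CARD('d) / (real N)^2"
proof -
  obtain xi where xi: "xi \<in> xgrid N" "measure \<mu>0 (cellx N xi) > 0" "xi = x"
    using msupp_wmeas[OF x[unfolded lattice_init_def]] by blast
  have "emeasure \<mu>0 (cellx N xi) > 0" by (rule measure_pos_emeasure[OF xi(2)])
  moreover have "sets \<mu>0 = sets borel" using fin unfolding fin_borel_def by auto
  ultimately obtain y where y: "y \<in> cellx N xi" "y \<in> msupp \<mu>0"
    using msupp_full by blast
  have "norm y < R0" using sub y(2) by auto
  moreover have "norm (y - xi) \<le> real CARD('d) / (real N)^2" by (rule cellx_norm[OF y(1)])
  ultimately show ?thesis
    using norm_triangle_ineq2[of xi y] norm_minus_commute[of y xi] xi(3)
    by (smt (verit) norm_ge_zero)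
qed

lemma fst_meas:
  fixes W :: "('a::metric_space \<times> 'b::metric_space) measure"
  assumes sW: "sets W = sets (borel :: ('a \<times> 'b) measure)"
  shows "fst \<in> measurable W borel"
  using measurable_cong_sets[OF sW refl] borel_measurable_continuous_onI[OF continuous_on_fst[OF continuous_on_id]]
  by blast

lemma CS_nonneg:
  fixes V :: "(real^'d) measure \<Rightarrow> ((real^'d) \<times> (real^'d)) measure"
  assumes V: "\<And>\<mu>. fin_borel \<mu> \<Longrightarrow> fin_borel (V \<mu>) \<and> distr (V \<mu>) borel fst = \<mu>"
    and V1: "\<And>\<mu> r. fin_borel \<mu> \<Longrightarrow> (\<forall>(x,v)\<in>msupp (V \<mu>). norm x \<le> r) \<Longrightarrow>
               (\<forall>(x,v)\<in>msupp (V \<mu>). norm v \<le> C_S * (1 + r))"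
  shows "C_S \<ge> 0"
proof -
  define \<mu> :: "(real^'d) measure" where "\<mu> = return (borel :: (real^'d) measure) 0"
  have fin: "fin_borel \<mu>" unfolding fin_borel_def \<mu>_def
    by (simp add: prob_space_return prob_space.finite_measure)
  have ms: "msupp \<mu> \<subseteq> {0}"
  proof
    fix y assume y: "y \<in> msupp \<mu>"
    show "y \<in> {0}"
    proof (rule ccontr)
      assume "y \<notin> {0}"
      then have "dist y 0 > 0" by simp
      moreover have "emeasure \<mu> (ball y (dist y 0)) = 0"
        unfolding \<mu>_def by (simp add: emeasure_return)
      moreover have "emeasure \<mu> (ball y (dist y 0)) > 0"
        using y \<open>dist y 0 > 0\<close> unfolding msupp_def by blast
      ultimately show False by simp
    qed
  qed
  have sV: "sets (V \<mu>) = sets borel" and dV: "distr (V \<mu>) borel fst = \<mu>"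
    using V[OF fin] unfolding fin_borel_def by blast+
  have spV: "space (V \<mu>) = UNIV" using sets_eq_imp_space_eq[OF sV] by simp
  have "emeasure (V \<mu>) UNIV = emeasure \<mu> UNIV"
    using emeasure_distr[OF fst_meas[OF sV], of UNIV] dV spV by simp
  also have "\<dots> = 1" unfolding \<mu>_def by (simp add: emeasure_return)
  finally have "emeasure (V \<mu>) UNIV > 0" by simp
  from msupp_full[OF sV this] obtain pp where "pp \<in> msupp (V \<mu>)" by blast
  then obtain y v where yv: "(y, v) \<in> msupp (V \<mu>)" by (cases pp) simp
  have hx: "\<forall>(x,v)\<in>msupp (V \<mu>). norm x \<le> 0"
  proof (clarify)
    fix a b assume "(a, b) \<in> msupp (V \<mu>)"
    then have "a \<in> msupp \<mu>" by (rule msupp_fst[OF sV dV])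
    then have "a = 0" using ms by blast
    then show "norm a \<le> 0" by simp
  qed
  have "case (y, v) of (x, v) \<Rightarrow> norm v \<le> C_S * (1 + 0)"
    using V1[OF fin hx] yv by (rule bspec)
  then have "norm v \<le> C_S" by simp
  then show ?thesis using norm_ge_zero[of v] by linarith
qed

lemma num1:
  fixes A e q :: real
  assumes "q \<ge> 1" "e \<ge> 0"
  shows "(A + real l * e) * q ^ l * q + e \<le> (A + real (Suc l) * e) * q ^ Suc l"
proof -
  have q: "1 \<le> q ^ Suc l" using assms(1) by (rule one_le_power)
  have "e * 1 \<le> e * q ^ Suc l" using q assms(2) by (rule mult_left_mono)
  then have "e \<le> e * q ^ Suc l" by simp
  moreover have "(A + real (Suc l) * e) * q ^ Suc l = (A + real l * e) * q ^ l * q + e * q ^ Suc l"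
    by (simp add: algebra_simps)
  ultimately show ?thesis by linarith
qed

lemma num2:
  fixes A e q :: real
  assumes "q \<ge> 1" "e \<ge> 0" "A > 0"
  shows "A \<le> (A + real (Suc l) * e) * q ^ Suc l"
proof -
  have q: "1 \<le> q ^ Suc l" using assms(1) by (rule one_le_power)
  have Z: "0 \<le> A + real (Suc l) * e" using assms by simp
  have "A \<le> A + real (Suc l) * e" using assms by simp
  also have "\<dots> = (A + real (Suc l) * e) * 1" by simp
  also have "\<dots> \<le> (A + real (Suc l) * e) * q ^ Suc l"
    using q Z by (rule mult_left_mono)
  finally show ?thesis .
qed

lemma final_num:
  fixes Rt C_S T N d :: real and n :: nat
  assumes CS: "C_S \<ge> 0" and T: "T > 0" and N1: "N \<ge> 1" and d: "d \<ge> 0"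
    and n: "real n \<le> T * N + 1"
    and N2: "N \<ge> 2 * C_S"
    and N3: "N \<ge> (2*d*T + 3*d) + 2 * C_S * (\<bar>Rt\<bar> + 1 + (2*d*T + 3*d))"
    and pos: "1 < (Rt + 1 + d / N^2 + real n * (2 * d / N^2)) * (1 + C_S / N) ^ n"
  shows "(Rt + 1 + d / N^2 + real n * (2 * d / N^2)) * (1 + C_S / N) ^ n \<le> exp (C_S * T) * (Rt + 2)"
proof -
  define K where "K = 2*d*T + 3*d"
  define Z where "Z = Rt + 1 + d / N^2 + real n * (2 * d / N^2)"
  define q where "q = 1 + C_S / N"
  have Npos: "N > 0" using N1 by simp
  have q1: "q \<ge> 1" unfolding q_def using CS Npos by simp
  have Zpos: "Z > 0"
  proof (rule ccontr)
    assume "\<not> Z > 0"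
    then have "Z * q ^ n \<le> 0" using q1 by (simp add: mult_nonpos_nonneg)
    then show False using pos unfolding Z_def q_def by simp
  qed
  have "q \<le> exp (C_S / N)" unfolding q_def by (rule exp_ge_add_one_self)
  then have "q ^ n \<le> exp (C_S / N) ^ n" using q1 by (intro power_mono) auto
  also have "\<dots> = exp (real n * (C_S / N))" by (rule exp_of_nat_mult[symmetric])
  also have "\<dots> \<le> exp (C_S * T + C_S / N)"
  proof -
    have "real n / N \<le> T + 1 / N" using n Npos by (simp add: field_simps)
    then have "C_S * (real n / N) \<le> C_S * (T + 1 / N)" using CS by (rule mult_left_mono)
    then show ?thesis by (simp add: algebra_simps)
  qed
  also have "\<dots> = exp (C_S * T) * exp (C_S / N)" by (simp add: exp_add)
  finally have qn: "q ^ n \<le> exp (C_S * T) * exp (C_S / N)" .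
  have eb: "exp (C_S / N) \<le> 1 + 2 * (C_S / N)"
    by (rule real_exp_bound_lemma) (use CS Npos N2 in \<open>auto simp: field_simps\<close>)
  have ZK: "Z \<le> Rt + 1 + K / N"
  proof -
    have "real n * (2 * d / N^2) \<le> (T * N + 1) * (2 * d / N^2)"
      using n d by (intro mult_right_mono) auto
    moreover have "d / N^2 \<le> d / N"
      using d N1 by (intro divide_left_mono) (auto simp: power2_eq_square)
    moreover have "(T * N + 1) * (2 * d / N^2) \<le> 2*d*T / N + 2 * d / N"
    proof -
      have "(T * N + 1) * (2 * d / N^2) = 2*d*T / N + 2 * d / N^2"
        using Npos by (simp add: field_simps power2_eq_square)
      moreover have "2 * d / N^2 \<le> 2 * d / N"
        using d N1 by (intro divide_left_mono) (auto simp: power2_eq_square)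
      ultimately show ?thesis by simp
    qed
    moreover have "K / N = 2*d*T / N + 2 * d / N + d / N" unfolding K_def by (simp add: add_divide_distrib)
    ultimately show ?thesis unfolding Z_def by linarith
  qed
  have K0: "0 \<le> K" using d T unfolding K_def by simp
  have "K / N \<le> K / 1" using N1 K0 by (intro divide_left_mono) auto
  then have KN: "K / N \<le> K" by simp
  have Zb: "Z \<le> \<bar>Rt\<bar> + 1 + K" using ZK KN by linarith
  have "Z * (1 + 2 * (C_S / N)) = Z + 2 * C_S * Z / N" by (simp add: field_simps)
  also have "\<dots> \<le> Rt + 1 + K / N + 2 * C_S * (\<bar>Rt\<bar> + 1 + K) / N"
    using ZK Zb CS Npos by (auto intro!: add_mono divide_right_mono mult_left_mono)
  also have "\<dots> = Rt + 1 + (K + 2 * C_S * (\<bar>Rt\<bar> + 1 + K)) / N" by (simp add: add_divide_distrib)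
  also have "\<dots> \<le> Rt + 2" using N3 Npos unfolding K_def by (simp add: field_simps)
  finally have Z2: "Z * (1 + 2 * (C_S / N)) \<le> Rt + 2" .
  have "Z * q ^ n \<le> Z * (exp (C_S * T) * exp (C_S / N))"
    using qn Zpos by (simp add: mult_left_mono)
  also have "\<dots> \<le> Z * (exp (C_S * T) * (1 + 2 * (C_S / N)))"
    using eb Zpos by (intro mult_left_mono) auto
  also have "\<dots> = exp (C_S * T) * (Z * (1 + 2 * (C_S / N)))" by simp
  also have "\<dots> \<le> exp (C_S * T) * (Rt + 2)" using Z2 by (intro mult_left_mono) auto
  finally show ?thesis unfolding Z_def q_def .
qed
theorem lemma4p3:
  fixes V :: "(real^'d) measure \<Rightarrow> ((real^'d) \<times> (real^'d)) measure"
    and s :: "(real^'d) measure \<Rightarrow> (real^'d) measure"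
    and c :: "real^'d \<Rightarrow> (real^'d) measure \<Rightarrow> real"
    and \<mu>0 :: "(real^'d) measure"
    and C_S L R C_b C_L R0 T :: real
    and C_F :: "real \<Rightarrow> real"
  assumes V: "\<And>\<mu>. fin_borel \<mu> \<Longrightarrow> fin_borel (V \<mu>) \<and> distr (V \<mu>) borel fst = \<mu>"
    and V1: "\<And>\<mu> r. fin_borel \<mu> \<Longrightarrow> (\<forall>(x,v)\<in>msupp (V \<mu>). norm x \<le> r) \<Longrightarrow>
               (\<forall>(x,v)\<in>msupp (V \<mu>). norm v \<le> C_S * (1 + r))"
    and V2: "\<And>R' \<mu> \<nu>. R' > 0 \<Longrightarrow> fin_borel \<mu> \<Longrightarrow> fin_borel \<nu> \<Longrightarrow>
               msupp \<mu> \<subseteq> ball 0 R' \<Longrightarrow> msupp \<nu> \<subseteq> ball 0 R' \<Longrightarrow>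
               bl_dist (V \<mu>) (V \<nu>) \<le> C_F R' * bl_dist \<mu> \<nu>"
    and S: "\<And>\<mu>. fin_borel \<mu> \<Longrightarrow> fin_borel (s \<mu>)"
    and S1: "\<And>\<mu> \<nu>. fin_borel \<mu> \<Longrightarrow> fin_borel \<nu> \<Longrightarrow> bl_dist (s \<mu>) (s \<nu>) \<le> L * bl_dist \<mu> \<nu>"
    and S2: "\<And>\<mu>. fin_borel \<mu> \<Longrightarrow> msupp (s \<mu>) \<subseteq> ball 0 R"
    and C1: "\<And>x \<mu>. fin_borel \<mu> \<Longrightarrow> \<bar>c x \<mu>\<bar> \<le> C_b"
    and C2: "\<And>x y \<mu> \<nu>. fin_borel \<mu> \<Longrightarrow> fin_borel \<nu> \<Longrightarrow>
               \<bar>c x \<mu> - c y \<nu>\<bar> \<le> C_L * (dist x y + bl_dist \<mu> \<nu>)"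
    and mu0: "fin_borel \<mu>0" "msupp \<mu>0 \<subseteq> ball 0 R0"
    and T: "T > 0"
  shows "\<exists>N0. \<forall>N\<ge>N0. \<forall>l \<tau>. real l \<le> T * real N \<longrightarrow> 0 \<le> \<tau> \<longrightarrow> \<tau> \<le> 1 / real N \<longrightarrow>
           msupp (lattice_sol N V s c \<mu>0 l \<tau>) \<subseteq> ball 0 (exp (C_S * T) * (max R R0 + 2) - 1)"
proof -
  let ?d = "real CARD('d)"
  let ?Rt = "max R R0"
  have CS: "C_S \<ge> 0" by (rule CS_nonneg[OF V V1])
  define K where "K = 2*?d*T + 3*?d"
  define N0 where "N0 = nat \<lceil>max 1 (max (2 * C_S) (K + 2 * C_S * (\<bar>?Rt\<bar> + 1 + K)))\<rceil>"
  show ?thesis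
  proof (intro exI[of _ N0] allI impI)
    fix N l :: nat and \<tau> :: real
    assume N: "N0 \<le> N" and l: "real l \<le> T * real N" and t0: "0 \<le> \<tau>" and t1: "\<tau> \<le> 1 / real N"
    have NN: "real N \<ge> max 1 (max (2 * C_S) (K + 2 * C_S * (\<bar>?Rt\<bar> + 1 + K)))"
      using N unfolding N0_def by linarith
    then have N1: "real N \<ge> 1" by simp
    then have Npos: "N > 0" by simp
    define A where "A = ?Rt + 1 + ?d / (real N)^2"
    define e where "e = 2 * ?d / (real N)^2"
    define q where "q = 1 + C_S / real N"
    define u where "u = (\<lambda>l::nat. (A + real l * e) * q ^ l)"
    have q1: "q \<ge> 1" unfolding q_def using CS by simp
    have e0: "e \<ge> 0" unfolding e_def by simp
    have solb: "\<forall>x\<in>msupp (lattice_step N V s c (lattice_node N V s c \<mu>0 k) t). norm x + 1 < u (Suc k)"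
      if P: "\<forall>y\<in>msupp (lattice_node N V s c \<mu>0 k). norm y + 1 < u k"
        and t: "0 \<le> t" "t \<le> 1 / real N" for k t
    proof
      fix x assume x: "x \<in> msupp (lattice_step N V s c (lattice_node N V s c \<mu>0 k) t)"
      have fin: "fin_borel (lattice_node N V s c \<mu>0 k)"
        by (cases k) (simp_all only: lattice_node.simps lattice_init_def lattice_step_def fin_borel_wmeas)
      from step_supp[OF V V1 S S2 fin P t Npos CS x]
      show "norm x + 1 < u (Suc k)"
      proof
        assume h: "0 < R \<and> norm x + 1 < R + 1 + ?d / (real N)^2"
        have RA: "R + 1 + ?d / (real N)^2 \<le> A" unfolding A_def by simp
        have "0 \<le> ?d / (real N)^2" by simp
        then have "A > 0" using h RA by linarith
        then have "A \<le> u (Suc k)"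
          unfolding u_def by (rule num2[OF q1 e0])
        then show ?thesis using h RA by linarith
      next
        assume "norm x + 1 < u k * (1 + C_S / real N) + 2 * ?d / (real N)^2"
        moreover have "u k * q + e \<le> u (Suc k)" unfolding u_def by (rule num1[OF q1 e0])
        ultimately show ?thesis unfolding q_def e_def by simp
      qed
    qed
    have nodeb: "\<forall>y\<in>msupp (lattice_node N V s c \<mu>0 k). norm y + 1 < u k" for k
    proof (induction k)
      case 0
      show ?case
      proof
        fix x assume "x \<in> msupp (lattice_node N V s c \<mu>0 0)"
        then have "R0 > 0 \<and> norm x < R0 + ?d / (real N)^2"
          using init_supp[OF mu0] by simp
        moreover have "R0 \<le> max R R0" by simp
        ultimately have "norm x + 1 < max R R0 + 1 + ?d / (real N)^2" by linarith
        then show "norm x + 1 < u 0" unfolding u_def A_def by simp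
      qed
    next
      case (Suc k)
      show ?case using solb[OF Suc, of "1 / real N"] by simp
    qed
    show "msupp (lattice_sol N V s c \<mu>0 l \<tau>) \<subseteq> ball 0 (exp (C_S * T) * (max R R0 + 2) - 1)"
    proof
      fix x assume x: "x \<in> msupp (lattice_sol N V s c \<mu>0 l \<tau>)"
      have xb: "norm x + 1 < u (Suc l)"
        using solb[OF nodeb t0 t1] x unfolding lattice_sol_def by blast
      have "u (Suc l) \<le> exp (C_S * T) * (?Rt + 2)"
        unfolding u_def A_def e_def q_def
      proof (rule final_num[OF CS T N1])
        show "0 \<le> ?d" by simp
        show "real (Suc l) \<le> T * real N + 1" using l by simp
        show "real N \<ge> 2 * C_S" using NN by simp
        show "real N \<ge> (2*?d*T + 3*?d) + 2 * C_S * (\<bar>?Rt\<bar> + 1 + (2*?d*T + 3*?d))"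
          using NN unfolding K_def by simp
        show "1 < (?Rt + 1 + ?d / (real N)^2 + real (Suc l) * (2 * ?d / (real N)^2)) * (1 + C_S / real N) ^ Suc l"
        proof -
          have "1 < u (Suc l)" using xb norm_ge_zero[of x] by linarith
          then show ?thesis unfolding u_def A_def e_def q_def by simp
        qed
      qed
      then show "x \<in> ball 0 (exp (C_S * T) * (max R R0 + 2) - 1)" using xb by simp
    qed
  qed
qed
end
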